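(* Let $\alpha$ be a unit-speed curve in $\mathbb{R}^3$ with nonvanishing curvature, let $\alpha_T$ be its tangent indicatrix with arc length $s_T$ and Frenet apparatus $\{T_T,N_T,B_T,\kappa_T,\tau_T\}$, and let $\beta$ be a Mannheim-direction curve of $\alpha_T$ (an $X$-direction curve of $\alpha_T$ with $N_\beta=B_T$). Then $$\frac{\tau_T}{\kappa_T}=\mp\,\frac{1}{\dfrac{\kappa_\beta^2}{(\kappa_\beta^2+\tau_\beta^2)^{3/2}}\,\dfrac{d}{ds_T}\Big(\dfrac{\tau_\beta}{\kappa_\beta}\Big)}.$$ That is, $\tau_T/\kappa_T$ equals this reciprocal up to sign.
   Context: Let $\alpha:I\subset\mathbb{R}\to\mathbb{R}^3$ be a unit-speed curve with curvature $\kappa>0$, torsion $\tau$ and Frenet frame $\{T,N,B\}$. The tangent indicatrix of $\alpha$ is the curve $\alpha_T=T$ on the unit sphere. Its arc length is $s_T=\int\kappa\,ds$. Its Frenet apparatus is $\{T_T,N_T,B_T,\kappa_T,\tau_T\}$, with $\frac{dT_T}{ds_T}=\kappa_TN_T$, $\frac{dN_T}{ds_T}=-\kappa_TT_T+\tau_TB_T$ and $\frac{dB_T}{ds_T}=-\tau_TN_T$. Let $x,y,z$ be real functions of $s_T$ with $x^2+y^2+z^2=1$, and set $X=xT_T+yN_T+zB_T$. An integral curve $\beta$ of $X$, meaning $d\beta/ds_T=X$, is an $X$-direction curve of $\alpha_T$. It has unit speed with arc length $s_T$. It is regarded as a Frenet curve with frame $\{T_\beta=X,N_\beta,B_\beta\}$,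 curvature $\kappa_\beta>0$ and torsion $\tau_\beta$. $\beta$ is a Mannheim-direction curve of $\alpha_T$ if $N_\beta=B_T$. *)

theory Defs
  imports "HOL-Analysis.Analysis"
begin

text \<open>Frenet apparatus of a space curve, with every function expressed in terms of a common
  parameter s ranging over I.  The derivative with respect to the curve's own arc length
  sigma is encoded by the chain rule: if d sigma / ds = v s, then
  d f / d sigma = (1 / v s) * d f / d s.  So the Frenet equations
  dT/dsigma = k N, dN/dsigma = -k T + t B, dB/dsigma = -t N become the equations below.\<close>

definition frenet_wrt ::
  "real set \<Rightarrow> (real \<Rightarrow> real) \<Rightarrow> (real \<Rightarrow> real^3) \<Rightarrow> (real \<Rightarrow> real^3) \<Rightarrow> (real \<Rightarrow> real^3)
    \<Rightarrow> (real \<Rightarrow> real) \<Rightarrow> (real \<Rightarrow> real) \<Rightarrow> bool" where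
  "frenet_wrt I v T N B k t \<longleftrightarrow>
     (\<forall>s\<in>I. norm (T s) = 1 \<and> norm (N s) = 1 \<and> T s \<bullet> N s = 0 \<and> B s = cross3 (T s) (N s)
        \<and> k s > 0
        \<and> (T has_vector_derivative (v s * k s) *\<^sub>R N s) (at s)
        \<and> (N has_vector_derivative (v s) *\<^sub>R (- (k s *\<^sub>R T s) + t s *\<^sub>R B s)) (at s)
        \<and> (B has_vector_derivative (- (v s * t s)) *\<^sub>R N s) (at s))"

end

theory Submission
  imports Defs
begin


lemma bac_cab: "cross3 a (cross3 b c) = (a \<bullet> c) *\<^sub>R b - (a \<bullet> b) *\<^sub>R c"
  by (simp add: cross3_simps forall_3)

lemma inner_deriv:
  assumes "(f has_vector_derivative f') (at u)" "(g has_vector_derivative g') (at u)"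
  shows "((\<lambda>u. f u \<bullet> g u) has_real_derivative (f' \<bullet> g u + f u \<bullet> g')) (at u)"
proof -
  have "((\<lambda>u. f u \<bullet> g u) has_derivative (\<lambda>h. f u \<bullet> (h *\<^sub>R g') + (h *\<^sub>R f') \<bullet> g u)) (at u)"
    using assms unfolding has_vector_derivative_def by (intro has_derivative_inner) auto
  moreover have "(\<lambda>h. f u \<bullet> (h *\<^sub>R g') + (h *\<^sub>R f') \<bullet> g u) = (*) (f' \<bullet> g u + f u \<bullet> g')"
    by (auto simp: fun_eq_iff algebra_simps)
  ultimately show ?thesis unfolding has_field_derivative_def by simp
qed

lemma zero_deriv:
  assumes "open I" "u \<in> I" "\<forall>v\<in>I. f v = 0" "(f has_real_derivative D) (at u)"
  shows "D = 0"
proof -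
  have "((\<lambda>_. 0) has_real_derivative D) (at u)"
    using has_field_derivative_transform_within_open[OF assms(4) assms(1,2)] assms(3) by auto
  then show ?thesis using DERIV_const DERIV_unique by blast
qed

lemma frame:
  fixes T N :: "real^3"
  assumes "norm T = 1" "norm N = 1" "T \<bullet> N = 0"
  shows "cross3 T N \<bullet> T = 0" "cross3 T N \<bullet> N = 0" "cross3 T N \<bullet> cross3 T N = 1"
    "cross3 T (cross3 T N) = - N" "cross3 N (cross3 T N) = T"
proof -
  have tt: "T \<bullet> T = 1" "N \<bullet> N = 1" using assms by (simp_all add: dot_square_norm)
  show "cross3 T N \<bullet> T = 0" "cross3 T N \<bullet> N = 0" by (simp_all add: dot_cross_self)
  show "cross3 T (cross3 T N) = - N" "cross3 N (cross3 T N) = T"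
    using tt assms(3) by (simp_all add: bac_cab inner_commute)
  have "(norm (cross3 T N))\<^sup>2 + (T \<bullet> N)\<^sup>2 = (norm T * norm N)\<^sup>2" by (rule norm_cross_dot)
  then show "cross3 T N \<bullet> cross3 T N = 1" using assms by (simp add: power2_norm_eq_inner)
qed


theorem corollary6p4:
  fixes I :: "real set"
    and \<alpha> T N B :: "real \<Rightarrow> real^3" and \<kappa> \<tau> :: "real \<Rightarrow> real"
    and TT NT BT :: "real \<Rightarrow> real^3" and \<kappa>T \<tau>T :: "real \<Rightarrow> real"
    and x y z :: "real \<Rightarrow> real" and X :: "real \<Rightarrow> real^3"
    and \<beta> Tb Nb Bb :: "real \<Rightarrow> real^3" and \<kappa>b \<tau>b :: "real \<Rightarrow> real"
    and s :: real
  assumes I: "open I" "is_interval I"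
    and alpha: "\<forall>u\<in>I. (\<alpha> has_vector_derivative T u) (at u)"
    and alpha_frenet: "frenet_wrt I (\<lambda>_. 1) T N B \<kappa> \<tau>"
    and TT_def: "\<forall>u\<in>I. (T has_vector_derivative \<kappa> u *\<^sub>R TT u) (at u)"
    and tangent_frenet: "frenet_wrt I \<kappa> TT NT BT \<kappa>T \<tau>T"
    and xyz: "\<forall>u\<in>I. (x u)\<^sup>2 + (y u)\<^sup>2 + (z u)\<^sup>2 = 1"
    and X_def: "\<forall>u\<in>I. X u = x u *\<^sub>R TT u + y u *\<^sub>R NT u + z u *\<^sub>R BT u"
    and beta: "\<forall>u\<in>I. (\<beta> has_vector_derivative \<kappa> u *\<^sub>R X u) (at u)"
    and Tb_def: "\<forall>u\<in>I. Tb u = X u"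
    and beta_frenet: "frenet_wrt I \<kappa> Tb Nb Bb \<kappa>b \<tau>b"
    and mannheim: "\<forall>u\<in>I. Nb u = BT u"
    and s: "s \<in> I"
  shows "\<exists>D. ((\<lambda>u. \<tau>b u / \<kappa>b u) has_real_derivative \<kappa> s * D) (at s) \<and>
           (\<tau>T s / \<kappa>T s =
              1 / ((\<kappa>b s)\<^sup>2 / ((\<kappa>b s)\<^sup>2 + (\<tau>b s)\<^sup>2) powr (3/2) * D)
            \<or> \<tau>T s / \<kappa>T s =
              - (1 / ((\<kappa>b s)\<^sup>2 / ((\<kappa>b s)\<^sup>2 + (\<tau>b s)\<^sup>2) powr (3/2) * D)))"
  proof -
  have tf: "\<And>u. u \<in> I \<Longrightarrow> norm (TT u) = 1 \<and> norm (NT u) = 1 \<and> TT u \<bullet> NT u = 0 \<and> BT u = cross3 (TT u) (NT u)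
        \<and> \<kappa>T u > 0
        \<and> (TT has_vector_derivative (\<kappa> u * \<kappa>T u) *\<^sub>R NT u) (at u)
        \<and> (NT has_vector_derivative (\<kappa> u) *\<^sub>R (- (\<kappa>T u *\<^sub>R TT u) + \<tau>T u *\<^sub>R BT u)) (at u)
        \<and> (BT has_vector_derivative (- (\<kappa> u * \<tau>T u)) *\<^sub>R NT u) (at u)"
    using tangent_frenet unfolding frenet_wrt_def by blast
  have bf: "\<And>u. u \<in> I \<Longrightarrow> norm (Tb u) = 1 \<and> norm (Nb u) = 1 \<and> Tb u \<bullet> Nb u = 0 \<and> Bb u = cross3 (Tb u) (Nb u)
        \<and> \<kappa>b u > 0
        \<and> (Tb has_vector_derivative (\<kappa> u * \<kappa>b u) *\<^sub>R Nb u) (at u)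
        \<and> (Nb has_vector_derivative (\<kappa> u) *\<^sub>R (- (\<kappa>b u *\<^sub>R Tb u) + \<tau>b u *\<^sub>R Bb u)) (at u)
        \<and> (Bb has_vector_derivative (- (\<kappa> u * \<tau>b u)) *\<^sub>R Nb u) (at u)"
    using beta_frenet unfolding frenet_wrt_def by blast
  have kpos: "\<And>u. u \<in> I \<Longrightarrow> \<kappa> u > 0"
    using alpha_frenet unfolding frenet_wrt_def by blast
  have fr: "\<And>u. u \<in> I \<Longrightarrow> BT u \<bullet> TT u = 0 \<and> BT u \<bullet> NT u = 0 \<and> BT u \<bullet> BT u = 1 \<and>
      cross3 (TT u) (BT u) = - NT u \<and> cross3 (NT u) (BT u) = TT u \<and> TT u \<bullet> TT u = 1 \<and> NT u \<bullet> NT u = 1"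
    using tf frame by (metis dot_square_norm power_one)
  have orth: "\<And>u. u \<in> I \<Longrightarrow> BT u \<bullet> TT u = 0 \<and> BT u \<bullet> NT u = 0 \<and> BT u \<bullet> BT u = 1 \<and>
      TT u \<bullet> BT u = 0 \<and> NT u \<bullet> BT u = 0 \<and> TT u \<bullet> NT u = 0 \<and> NT u \<bullet> TT u = 0 \<and>
      TT u \<bullet> TT u = 1 \<and> NT u \<bullet> NT u = 1"
    using fr tf by (metis inner_commute)
  have TbBT0: "\<And>u. u \<in> I \<Longrightarrow> Tb u \<bullet> BT u = 0" using bf mannheim by metis
  have BbBT0: "\<And>u. u \<in> I \<Longrightarrow> Bb u \<bullet> BT u = 0" using bf mannheim by (metis dot_cross_self(3))
  have P: "x u = Tb u \<bullet> TT u \<and> y u = Tb u \<bullet> NT u \<and> z u = 0 \<and> \<kappa>b u = \<tau>T u * y u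
      \<and> \<tau>b u = \<tau>T u * x u" if u: "u \<in> I" for u
  proof -
    note t = tf[OF u] and b = bf[OF u] and f = fr[OF u] and o = orth[OF u]
    have Tbu: "Tb u = x u *\<^sub>R TT u + y u *\<^sub>R NT u + z u *\<^sub>R BT u" using Tb_def X_def u by auto
    have xu: "x u = Tb u \<bullet> TT u" using o unfolding Tbu by (simp add: inner_add_left)
    have yu: "y u = Tb u \<bullet> NT u" using o unfolding Tbu by (simp add: inner_add_left)
    have zu: "z u = 0" using o TbBT0[OF u] unfolding Tbu by (simp add: inner_add_left)
    have d1: "((\<lambda>v. Tb v \<bullet> BT v) has_real_derivative
        ((\<kappa> u * \<kappa>b u) *\<^sub>R Nb u) \<bullet> BT u + Tb u \<bullet> ((- (\<kappa> u * \<tau>T u)) *\<^sub>R NT u)) (at u)"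
      using b t by (intro inner_deriv) auto
    have "((\<kappa> u * \<kappa>b u) *\<^sub>R Nb u) \<bullet> BT u + Tb u \<bullet> ((- (\<kappa> u * \<tau>T u)) *\<^sub>R NT u) = 0"
      using zero_deriv[OF I(1) u _ d1] TbBT0 by blast
    then have "\<kappa> u * (\<kappa>b u - \<tau>T u * y u) = 0"
      using f mannheim u yu by (simp add: algebra_simps)
    then have kb: "\<kappa>b u = \<tau>T u * y u" using kpos[OF u] by simp
    have Bbu: "Bb u = y u *\<^sub>R TT u - x u *\<^sub>R NT u"
      using b f mannheim u zu unfolding Tbu
      by (simp add: cross_add_left cross_mult_left)
    have d2: "((\<lambda>v. Bb v \<bullet> BT v) has_real_derivative
        ((- (\<kappa> u * \<tau>b u)) *\<^sub>R Nb u) \<bullet> BT u + Bb u \<bullet> ((- (\<kappa> u * \<tau>T u)) *\<^sub>R NT u)) (at u)"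
      using b t by (intro inner_deriv) auto
    have "((- (\<kappa> u * \<tau>b u)) *\<^sub>R Nb u) \<bullet> BT u + Bb u \<bullet> ((- (\<kappa> u * \<tau>T u)) *\<^sub>R NT u) = 0"
      using zero_deriv[OF I(1) u _ d2] BbBT0 by blast
    then have "\<kappa> u * (\<tau>T u * x u - \<tau>b u) = 0"
      using o mannheim u unfolding Bbu by (simp add: algebra_simps inner_diff_left)
    then have tb: "\<tau>b u = \<tau>T u * x u" using kpos[OF u] by simp
    show ?thesis using xu yu zu kb tb by simp
  qed
  note t = tf[OF s] and b = bf[OF s] and f = fr[OF s] and o = orth[OF s]
  have dx0: "((\<lambda>v. Tb v \<bullet> TT v) has_real_derivative
        ((\<kappa> s * \<kappa>b s) *\<^sub>R Nb s) \<bullet> TT s + Tb s \<bullet> ((\<kappa> s * \<kappa>T s) *\<^sub>R NT s)) (at s)"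
    using b t by (intro inner_deriv) auto
  have dx: "(x has_real_derivative \<kappa> s * \<kappa>T s * y s) (at s)"
  proof -
    have "(x has_real_derivative
        ((\<kappa> s * \<kappa>b s) *\<^sub>R Nb s) \<bullet> TT s + Tb s \<bullet> ((\<kappa> s * \<kappa>T s) *\<^sub>R NT s)) (at s)"
      using has_field_derivative_transform_within_open[OF dx0 I(1) s] P by auto
    moreover have "((\<kappa> s * \<kappa>b s) *\<^sub>R Nb s) \<bullet> TT s + Tb s \<bullet> ((\<kappa> s * \<kappa>T s) *\<^sub>R NT s) = \<kappa> s * \<kappa>T s * y s"
      using o mannheim s P[OF s] by (simp add: inner_commute)
    ultimately show ?thesis by simp
  qed
  have dy0: "((\<lambda>v. Tb v \<bullet> NT v) has_real_derivative
        ((\<kappa> s * \<kappa>b s) *\<^sub>R Nb s) \<bullet> NT s + Tb s \<bullet> ((\<kappa> s) *\<^sub>R (- (\<kappa>T s *\<^sub>R TT s) + \<tau>T s *\<^sub>R BT s))) (at s)"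
    using b t by (intro inner_deriv) auto
  have dy: "(y has_real_derivative - (\<kappa> s * \<kappa>T s * x s)) (at s)"
  proof -
    have "(y has_real_derivative
        ((\<kappa> s * \<kappa>b s) *\<^sub>R Nb s) \<bullet> NT s + Tb s \<bullet> ((\<kappa> s) *\<^sub>R (- (\<kappa>T s *\<^sub>R TT s) + \<tau>T s *\<^sub>R BT s))) (at s)"
      using has_field_derivative_transform_within_open[OF dy0 I(1) s] P by auto
    moreover have "((\<kappa> s * \<kappa>b s) *\<^sub>R Nb s) \<bullet> NT s + Tb s \<bullet> ((\<kappa> s) *\<^sub>R (- (\<kappa>T s *\<^sub>R TT s) + \<tau>T s *\<^sub>R BT s)) = - (\<kappa> s * \<kappa>T s * x s)"
      using o mannheim s P[OF s] TbBT0[OF s] by (simp add: inner_add_right algebra_simps)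
    ultimately show ?thesis by simp
  qed
  have ynz: "\<And>u. u \<in> I \<Longrightarrow> y u \<noteq> 0 \<and> \<tau>T u \<noteq> 0" using P bf by (metis mult_zero_left mult_zero_right less_irrefl)
  have x2y2: "(x s)\<^sup>2 + (y s)\<^sup>2 = 1" using xyz s P[OF s] by auto
  define D where "D = \<kappa>T s / (y s)\<^sup>2"
  have dq: "((\<lambda>u. x u / y u) has_real_derivative
      (\<kappa> s * \<kappa>T s * y s * y s - x s * - (\<kappa> s * \<kappa>T s * x s)) / (y s * y s)) (at s)"
    using DERIV_divide[OF dx dy] ynz[OF s] by simp
  have "(\<kappa> s * \<kappa>T s * y s * y s - x s * - (\<kappa> s * \<kappa>T s * x s)) / (y s * y s)
      = \<kappa> s * \<kappa>T s * ((x s)\<^sup>2 + (y s)\<^sup>2) / (y s)\<^sup>2"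
    by (simp add: power2_eq_square algebra_simps)
  also have "\<dots> = \<kappa> s * D" using x2y2 by (simp add: D_def)
  finally have dq': "((\<lambda>u. x u / y u) has_real_derivative \<kappa> s * D) (at s)" using dq by simp
  have eq: "\<forall>u\<in>I. x u / y u = \<tau>b u / \<kappa>b u" using P ynz by simp
  have der: "((\<lambda>u. \<tau>b u / \<kappa>b u) has_real_derivative \<kappa> s * D) (at s)"
    using has_field_derivative_transform_within_open[OF dq' I(1) s] eq by auto
  have sq: "(\<kappa>b s)\<^sup>2 + (\<tau>b s)\<^sup>2 = (\<tau>T s)\<^sup>2"
    using P[OF s] x2y2 by (simp add: power_mult_distrib algebra_simps) (metis distrib_left mult_1_right)
  have pw: "((\<tau>T s)\<^sup>2) powr (3/2) = \<bar>\<tau>T s\<bar> ^ 3"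
  proof -
    have "((\<tau>T s)\<^sup>2) powr (3/2) = (\<bar>\<tau>T s\<bar> powr 2) powr (3/2)"
    proof -
      have "\<bar>\<tau>T s\<bar> powr (real 2) = \<bar>\<tau>T s\<bar> ^ 2" using ynz[OF s] by (intro powr_realpow) simp
      then show ?thesis by simp
    qed
    also have "\<dots> = \<bar>\<tau>T s\<bar> powr 3"
      by (simp only: powr_powr) (simp add: mult.commute)
    also have "\<dots> = \<bar>\<tau>T s\<bar> ^ 3" using ynz[OF s] by (simp add: powr_realpow)
    finally show ?thesis .
  qed
  have val: "(\<kappa>b s)\<^sup>2 / ((\<kappa>b s)\<^sup>2 + (\<tau>b s)\<^sup>2) powr (3/2) * D = \<kappa>T s / \<bar>\<tau>T s\<bar>"
    unfolding sq pw D_def using P[OF s] ynz[OF s]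
    by (simp add: power_mult_distrib field_simps power2_eq_square power3_eq_cube) 
  have kT: "\<kappa>T s > 0" using t by simp
  show ?thesis
  proof (intro exI conjI)
    show "((\<lambda>u. \<tau>b u / \<kappa>b u) has_real_derivative \<kappa> s * D) (at s)" by (rule der)
    show "\<tau>T s / \<kappa>T s = 1 / ((\<kappa>b s)\<^sup>2 / ((\<kappa>b s)\<^sup>2 + (\<tau>b s)\<^sup>2) powr (3/2) * D) \<or>
          \<tau>T s / \<kappa>T s = - (1 / ((\<kappa>b s)\<^sup>2 / ((\<kappa>b s)\<^sup>2 + (\<tau>b s)\<^sup>2) powr (3/2) * D))"
      unfolding val using kT by (cases "\<tau>T s \<ge> 0") (auto simp: abs_if)
  qed
qed

end
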